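(* Let $0<\alpha\le 5\pi/6$. Then for all $u,v\in V$: $u$ and $v$ are connected in $G^s_\alpha$ if and only if they are connected in $G_R$.
   Context: Let $V$ be a finite set of pairwise distinct points (nodes) in the Euclidean plane, $d$ the Euclidean distance, and $R>0$. Let $G_R=(V,E)$ be the undirected graph with $E=\{\{u,v\}: u\neq v,\ d(u,v)\le R\}$. Fix a finite increasing sequence of radius levels $0<r_1<r_2<\dots<r_k=R$. For $u\in V$ and $1\le i\le k$ let $S_i(u)=\{v\in V\setminus\{u\}: d(u,v)\le r_i\}$. For $0<\alpha<2\pi$, a closed cone of width $\alpha$ with apex $u$ is a set $\{u+t(\cos\varphi,\sin\varphi): t\ge 0,\ \varphi\in[\theta-\alpha/2,\theta+\alpha/2]\}$ for some $\theta$. A finite set $S\subseteq V\setminus\{u\}$ has an $\alpha$-gap (at $u$) if some closed cone of width $\alpha$ with apex $u$ contains no node of $S$ (in particular $\emptyset$ has an $\alpha$-gap). The algorithm CBTC($\alpha$) assigns to each $u$ the index $i_u$ = the least $i\in\{1,\dots,k\}$ such that $S_i(u)$ has no $\alpha$-gap, or $i_u=k$ if there is no such $i$; set $N_\alpha(u)=S_{i_u}(u)$. Shrink-back: call $u$ a boundary node if $S_k(u)$ has an $\alpha$-gap. For a set $D$ of directions (angles) let $\mathrm{cover}_\alpha(D)=\{\theta: \exists\theta'\in D,\ \text{the angular distance between }\theta\text{ and }\theta'\text{ (mod }2\pi)\text{ is}\le\alpha/2\}$. For a boundary node $u$ and $1\le i\le k$ let $\mathrm{dir}_i$ be the set of directions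 from $u$ of the nodes in $S_i(u)$; let $i^*$ be the least $i$ with $\mathrm{cover}_\alpha(\mathrm{dir}_i)=\mathrm{cover}_\alpha(\mathrm{dir}_k)$ and set $N^s_\alpha(u)=S_{i^*}(u)$. For a non-boundary node set $N^s_\alpha(u)=N_\alpha(u)$. Let $N^s_\alpha=\{(u,v): v\in N^s_\alpha(u)\}$, $E^s_\alpha$ its symmetric closure $\{\{u,v\}: (u,v)\in N^s_\alpha\text{ or }(v,u)\in N^s_\alpha\}$, and $G^s_\alpha=(V,E^s_\alpha)$. *)

theory Defs
  imports Complex_Main
begin

text \<open>Points of the Euclidean plane are modelled as complex numbers (dist = Euclidean distance).
  Radius levels r 1 < ... < r k = R are given by a function r :: nat => real on {1..k}.\<close>

definition S_i :: "complex set \<Rightarrow> (nat \<Rightarrow> real) \<Rightarrow> nat \<Rightarrow> complex \<Rightarrow> complex set" where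
  "S_i V r i u = {v \<in> V. v \<noteq> u \<and> dist u v \<le> r i}"

definition cone :: "complex \<Rightarrow> real \<Rightarrow> real \<Rightarrow> complex set" where
  "cone u \<alpha> \<theta> = {u + complex_of_real t * cis \<phi> | t \<phi>.
      t \<ge> 0 \<and> \<theta> - \<alpha>/2 \<le> \<phi> \<and> \<phi> \<le> \<theta> + \<alpha>/2}"

definition has_gap :: "real \<Rightarrow> complex \<Rightarrow> complex set \<Rightarrow> bool" where
  "has_gap \<alpha> u S \<longleftrightarrow> (\<exists>\<theta>. \<forall>v\<in>S. v \<notin> cone u \<alpha> \<theta>)"

definition dirs :: "complex \<Rightarrow> complex set \<Rightarrow> real set" where
  "dirs u S = {\<phi>. \<exists>v\<in>S. \<exists>t>0. v - u = complex_of_real t * cis \<phi>}"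

definition cover :: "real \<Rightarrow> real set \<Rightarrow> real set" where
  "cover \<alpha> D = {\<theta>. \<exists>\<theta>'\<in>D. \<exists>m::int. \<bar>\<theta> - \<theta>' - 2 * pi * of_int m\<bar> \<le> \<alpha>/2}"

definition idx_u :: "complex set \<Rightarrow> (nat \<Rightarrow> real) \<Rightarrow> nat \<Rightarrow> real \<Rightarrow> complex \<Rightarrow> nat" where
  "idx_u V r k \<alpha> u =
     (if \<exists>i\<in>{1..k}. \<not> has_gap \<alpha> u (S_i V r i u)
      then (LEAST i. i \<in> {1..k} \<and> \<not> has_gap \<alpha> u (S_i V r i u)) else k)"

definition N_cbtc :: "complex set \<Rightarrow> (nat \<Rightarrow> real) \<Rightarrow> nat \<Rightarrow> real \<Rightarrow> complex \<Rightarrow> complex set" where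
  "N_cbtc V r k \<alpha> u = S_i V r (idx_u V r k \<alpha> u) u"

definition boundary :: "complex set \<Rightarrow> (nat \<Rightarrow> real) \<Rightarrow> nat \<Rightarrow> real \<Rightarrow> complex \<Rightarrow> bool" where
  "boundary V r k \<alpha> u \<longleftrightarrow> has_gap \<alpha> u (S_i V r k u)"

definition idx_star :: "complex set \<Rightarrow> (nat \<Rightarrow> real) \<Rightarrow> nat \<Rightarrow> real \<Rightarrow> complex \<Rightarrow> nat" where
  "idx_star V r k \<alpha> u = (LEAST i. i \<in> {1..k} \<and>
      cover \<alpha> (dirs u (S_i V r i u)) = cover \<alpha> (dirs u (S_i V r k u)))"

definition N_shrink :: "complex set \<Rightarrow> (nat \<Rightarrow> real) \<Rightarrow> nat \<Rightarrow> real \<Rightarrow> complex \<Rightarrow> complex set" where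
  "N_shrink V r k \<alpha> u =
     (if boundary V r k \<alpha> u then S_i V r (idx_star V r k \<alpha> u) u else N_cbtc V r k \<alpha> u)"

definition edge_s :: "complex set \<Rightarrow> (nat \<Rightarrow> real) \<Rightarrow> nat \<Rightarrow> real \<Rightarrow> complex \<Rightarrow> complex \<Rightarrow> bool" where
  "edge_s V r k \<alpha> u v \<longleftrightarrow> u \<in> V \<and> v \<in> V \<and>
      (v \<in> N_shrink V r k \<alpha> u \<or> u \<in> N_shrink V r k \<alpha> v)"

definition edge_R :: "complex set \<Rightarrow> real \<Rightarrow> complex \<Rightarrow> complex \<Rightarrow> bool" where
  "edge_R V R u v \<longleftrightarrow> u \<in> V \<and> v \<in> V \<and> u \<noteq> v \<and> dist u v \<le> R"

end

theory Submission
  imports Defs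
begin

lemma cos_2pi3: "cos (2*pi/3) = -1/2"
proof -
  have "cos (2*pi/3) = cos (pi - pi/3)" by (simp add: field_simps)
  also have "\<dots> = - cos (pi/3)" by (rule cos_pi_minus)
  finally show ?thesis by (simp add: cos_60)
qed

lemma cos_lt_neg_half:
  assumes "2*pi/3 < x" "x < 4*pi/3"
  shows "cos x < -1/2"
proof (cases "x \<le> pi")
  case True
  then have "cos x < cos (2*pi/3)" using assms by (intro cos_monotone_0_pi) auto
  then show ?thesis by (simp add: cos_2pi3)
next
  case False
  have "cos (2*pi - x) < cos (2*pi/3)" using assms False by (intro cos_monotone_0_pi) auto
  moreover have "cos (2*pi - x) = cos x" by (simp add: cos_diff)
  ultimately show ?thesis by (simp add: cos_2pi3)
qed

lemma cos_neg_mid: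
  assumes "pi/2 < x" "x < 3*pi/2"
  shows "cos x < 0"
proof -
  have "cos (x - pi) > 0" using assms by (intro cos_gt_zero_pi) auto
  moreover have "cos (x - pi) = - cos x" by (simp add: cos_diff)
  ultimately show ?thesis by simp
qed

lemma quad_max:
  fixes a a0 a1 p q :: real
  assumes "a0 \<le> a" "a \<le> a1"
  shows "a*a + p*a + q \<le> max (a0*a0 + p*a0 + q) (a1*a1 + p*a1 + q)"
proof (cases "a + a0 + p \<le> 0")
  case True
  have "(a*a + p*a + q) - (a0*a0 + p*a0 + q) = (a - a0)*(a + a0 + p)" by algebra
  also have "\<dots> \<le> 0" using True assms by (simp add: mult_nonneg_nonpos)
  finally show ?thesis by simp
next
  case False
  have "(a*a + p*a + q) - (a1*a1 + p*a1 + q) = (a - a1)*(a + a1 + p)" by algebra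
  also have "\<dots> \<le> 0" using False assms by (simp add: mult_nonpos_nonneg)
  finally show ?thesis by simp
qed

lemma geomG:
  fixes a b phi psi :: real
  assumes a: "0 < a" "a < 1" and b: "0 < b" "b < 1"
    and p1: "pi/3 < phi" and p2: "pi/3 < psi" and s: "phi + psi \<le> 5*pi/6"
    and ha: "2 * cos phi \<le> a" and hb: "2 * cos psi \<le> b"
  shows "(a * cos phi + b * cos psi - 1)^2 + (a * sin phi - b * sin psi)^2 < 1"
proof -
  define c1 where "c1 = cos phi"
  define c2 where "c2 = cos psi"
  define C where "C = cos (phi + psi)"
  have phi2: "phi < pi/2" and psi2: "psi < pi/2" using p1 p2 s by auto
  have c1p: "c1 > 0" unfolding c1_def using p1 phi2 by (intro cos_gt_zero_pi) auto
  have c2p: "c2 > 0" unfolding c2_def using p2 psi2 by (intro cos_gt_zero_pi) auto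
  have Cn: "C < 0" unfolding C_def using p1 p2 s by (intro cos_neg_mid) auto
  define g where "g = (\<lambda>a b::real. a*a + b*b + 2*a*b*C - 2*a*c1 - 2*b*c2)"
  have expand: "(a * cos phi + b * cos psi - 1)^2 + (a * sin phi - b * sin psi)^2 = 1 + g a b"
  proof -
    have "(a * cos phi + b * cos psi - 1)^2 + (a * sin phi - b * sin psi)^2
      = a*a*((sin phi)^2 + (cos phi)^2) + b*b*((sin psi)^2 + (cos psi)^2) + 1
        + 2*a*b*(cos phi * cos psi - sin phi * sin psi) - 2*a*cos phi - 2*b*cos psi"
      by algebra
    also have "\<dots> = a*a + b*b + 1 + 2*a*b*cos (phi+psi) - 2*a*cos phi - 2*b*cos psi"
      by (simp only: sin_cos_squared_add cos_add mult_1_right)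
    also have "\<dots> = 1 + g a b" by (simp add: g_def C_def c1_def c2_def)
    finally show ?thesis .
  qed
  have k1: "g 1 1 < 0"
  proof -
    define sg where "sg = (phi + psi)/2"
    define dl where "dl = (phi - psi)/2"
    have e1: "phi = sg + dl" "psi = sg - dl" by (simp_all add: sg_def dl_def field_simps)
    have "c1 + c2 = 2 * cos sg * cos dl" unfolding c1_def c2_def e1 by (simp add: cos_add cos_diff)
    moreover have "C = 2 * (cos sg)^2 - 1" proof - have "phi + psi = 2*sg" by (simp add: sg_def) then show ?thesis unfolding C_def by (simp only: cos_double_cos) qed
    moreover have "cos sg > 0" unfolding sg_def using p1 p2 s by (intro cos_gt_zero_pi) auto
    moreover have "cos sg < cos \<bar>dl\<bar>" unfolding sg_def dl_def using p1 p2 s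
      by (intro cos_monotone_0_pi) auto
    moreover have "cos \<bar>dl\<bar> = cos dl" by (simp add: abs_real_def)
    ultimately have "1 + C < c1 + c2"
      by (simp add: power2_eq_square)
    then show ?thesis by (simp add: g_def)
  qed
  have k2: "g (2*c1) 1 < 0"
  proof -
    have "g (2*c1) 1 = 1 + 2 * (2 * (c1 * C)) - 2*c2" by (simp add: g_def algebra_simps)
    also have "2 * (c1 * C) = cos (2*phi+psi) + c2"
      unfolding c1_def C_def c2_def by (simp add: cos_times_cos algebra_simps)
    also have "cos (2*phi+psi) < -1/2" using p1 p2 s phi2 by (intro cos_lt_neg_half) auto
    then have "1 + 2 * (cos (2*phi+psi) + c2) - 2*c2 < 0" by simp
    finally show ?thesis .
  qed
  have k3: "g 1 (2*c2) < 0"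
  proof -
    have "g 1 (2*c2) = 1 + 2 * (2 * (c2 * C)) - 2*c1" by (simp add: g_def algebra_simps)
    also have "2 * (c2 * C) = cos (phi+2*psi) + c1"
      unfolding c1_def C_def c2_def by (simp add: cos_times_cos algebra_simps)
    also have "cos (phi+2*psi) < -1/2" using p1 p2 s psi2 by (intro cos_lt_neg_half) auto
    then have "1 + 2 * (cos (phi+2*psi) + c1) - 2*c1 < 0" by simp
    finally show ?thesis .
  qed
  have k4: "g (2*c1) (2*c2) < 0"
  proof -
    have "g (2*c1) (2*c2) = 8*(c1*c2)*C" by (simp add: g_def algebra_simps)
    also have "\<dots> < 0" using c1p c2p Cn by (simp add: mult_pos_neg)
    finally show ?thesis .
  qed
  have ga: "g x y \<le> max (g (2*c1) y) (g 1 y)" if "2*c1 \<le> x" "x \<le> 1" for x y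
  proof -
    have "x*x + (2*y*C - 2*c1)*x + (y*y - 2*y*c2) \<le> max ((2*c1)*(2*c1) + (2*y*C - 2*c1)*(2*c1) + (y*y - 2*y*c2))
         (1*1 + (2*y*C - 2*c1)*1 + (y*y - 2*y*c2))"
      by (rule quad_max) (use that in auto)
    then show ?thesis by (simp add: g_def algebra_simps)
  qed
  have gb: "g x y \<le> max (g x (2*c2)) (g x 1)" if "2*c2 \<le> y" "y \<le> 1" for x y
  proof -
    have "y*y + (2*x*C - 2*c2)*y + (x*x - 2*x*c1) \<le> max ((2*c2)*(2*c2) + (2*x*C - 2*c2)*(2*c2) + (x*x - 2*x*c1))
         (1*1 + (2*x*C - 2*c2)*1 + (x*x - 2*x*c1))"
      by (rule quad_max) (use that in auto)
    then show ?thesis by (simp add: g_def algebra_simps)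
  qed
  have "g a b < 0"
  proof -
    have A: "2*c1 \<le> a" "a \<le> 1" using ha a by (auto simp: c1_def)
    have B: "2*c2 \<le> b" "b \<le> 1" using hb b by (auto simp: c2_def)
    have "g (2*c1) b < 0" using gb[OF B, of "2*c1"] k2 k4 by linarith
    moreover have "g 1 b < 0" using gb[OF B, of 1] k1 k3 by linarith
    ultimately show ?thesis using ga[OF A, of b] by linarith
  qed
  then show ?thesis using expand by linarith
qed

lemma angle_gt:
  fixes a phi :: real
  assumes "0 < a" "a < 1" "2 * cos phi \<le> a" "0 \<le> phi" "phi \<le> pi"
  shows "pi/3 < phi"
proof (rule ccontr)
  assume "\<not> pi/3 < phi"
  then have "cos (pi/3) \<le> cos phi" using assms by (intro cos_monotone_0_pi_le) auto
  then show False using assms by (simp add: cos_60)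
qed

lemma geomC:
  fixes z y :: complex
  assumes z: "z \<noteq> 0" "cmod z < 1" "1 \<le> cmod (z - 1)"
    and y: "y \<noteq> 0" "cmod y < 1" "1 \<le> cmod (y - 1)"
    and az: "Arg z > 0" and ay: "Arg y < 0" and s: "Arg z - Arg y \<le> 5*pi/6"
  shows "cmod (z + y - 1) < 1"
proof -
  define a where "a = cmod z"
  define b where "b = cmod y"
  define phi where "phi = Arg z"
  define psi where "psi = - Arg y"
  have ap: "0 < a" "a < 1" using z by (auto simp: a_def)
  have bp: "0 < b" "b < 1" using y by (auto simp: b_def)
  have Rz: "Re z = a * cos phi" "Im z = a * sin phi"
    using z by (simp_all add: a_def phi_def cos_Arg sin_Arg)
  have Ry: "Re y = b * cos psi" "Im y = - (b * sin psi)"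
    using y by (simp_all add: b_def psi_def cos_Arg sin_Arg)
  have "1 \<le> (cmod (z - 1))^2" using z by simp
  also have "(cmod (z - 1))^2 = (a * cos phi - 1)^2 + (a * sin phi)^2"
    by (simp add: cmod_power2 Rz)
  also have "\<dots> = a*a*((sin phi)^2 + (cos phi)^2) - 2*a*cos phi + 1" by algebra
  finally have "0 \<le> a * (a - 2 * cos phi)" by (simp add: algebra_simps)
  then have ha: "2 * cos phi \<le> a" using ap by (simp add: zero_le_mult_iff)
  have "1 \<le> (cmod (y - 1))^2" using y by simp
  also have "(cmod (y - 1))^2 = (b * cos psi - 1)^2 + (b * sin psi)^2"
    by (simp add: cmod_power2 Ry)
  also have "\<dots> = b*b*((sin psi)^2 + (cos psi)^2) - 2*b*cos psi + 1" by algebra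
  finally have "0 \<le> b * (b - 2 * cos psi)" by (simp add: algebra_simps)
  then have hb: "2 * cos psi \<le> b" using bp by (simp add: zero_le_mult_iff)
  have p1: "pi/3 < phi" using angle_gt[OF ap ha] az Arg_bounded[of z] by (auto simp: phi_def)
  have p2: "pi/3 < psi" using angle_gt[OF bp hb] ay Arg_bounded[of y] by (auto simp: psi_def)
  have "(cmod (z + y - 1))^2 = (a * cos phi + b * cos psi - 1)^2 + (a * sin phi - b * sin psi)^2"
    by (simp add: cmod_power2 Rz Ry)
  also have "\<dots> < 1" using geomG[OF ap bp p1 p2 _ ha hb] s by (simp add: phi_def psi_def)
  finally show ?thesis by (simp add: power_less_one_iff)
qed


lemma m_zero:
  fixes x :: real and m :: int
  assumes "-pi < x" "x \<le> pi" "-pi < x + 2*pi*of_int m" "x + 2*pi*of_int m < pi"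
  shows "m = 0"
proof (rule ccontr)
  assume "m \<noteq> 0"
  then consider "m \<ge> 1" | "m \<le> -1" by linarith
  then show False
  proof cases
    case 1
    then have "2*pi*1 \<le> 2*pi*of_int m" by (intro mult_left_mono) auto
    then show False using assms by linarith
  next
    case 2
    then have "2*pi*of_int m \<le> 2*pi*(-1)" by (intro mult_left_mono) auto
    then show False using assms by linarith
  qed
qed

lemma extract_nodes:
  fixes B :: "'a \<Rightarrow> real" and N :: "'a set" and \<alpha> :: real
  assumes hfin: "finite N" and al: "0 < \<alpha>" "\<alpha> \<le> 5*pi/6"
    and rng: "\<And>w. w \<in> N \<Longrightarrow> -pi < B w \<and> B w \<le> pi"
    and cov: "\<And>\<theta>. \<bar>\<theta>\<bar> \<le> \<alpha>/2 \<Longrightarrow> \<exists>w\<in>N. \<exists>m::int. \<bar>\<theta> - B w - 2*pi*of_int m\<bar> \<le> \<alpha>/2"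
    and bad: "\<And>w. w \<in> N \<Longrightarrow> pi/3 < \<bar>B w\<bar>"
  shows "\<exists>w1\<in>N. \<exists>w2\<in>N. B w1 > 0 \<and> B w2 < 0 \<and> B w1 - B w2 \<le> \<alpha>"
proof -
  have pi3: "pi \<ge> 2" by (rule pi_ge_two)
  obtain w0 m where w0: "w0 \<in> N" and hm: "\<bar>0 - B w0 - 2*pi*of_int m\<bar> \<le> \<alpha>/2"
    using cov[of 0] al by auto
  have "m = 0" using rng[OF w0] hm[unfolded abs_le_iff] al pi3 by (intro m_zero[of "B w0"]) (auto simp:)
  with hm have w0a: "\<bar>B w0\<bar> \<le> \<alpha>/2" by simp
  have "B w0 \<noteq> 0" using bad[OF w0] by auto
  then consider "B w0 > 0" | "B w0 < 0" by linarith
  then show ?thesis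
  proof cases
    case 1
    define U where "U = {w \<in> N. B w > 0}"
    have Uf: "finite (B ` U)" using hfin by (simp add: U_def)
    have Une: "B ` U \<noteq> {}" using w0 1 by (auto simp: U_def)
    obtain w1 where w1: "w1 \<in> U" "B w1 = Min (B ` U)" using Min_in[OF Uf Une] by auto
    have w1min: "\<And>w. w \<in> U \<Longrightarrow> B w1 \<le> B w" using w1(2) Min_le[OF Uf] by auto
    define p1 where "p1 = B w1"
    have p1a: "p1 \<le> \<alpha>/2" using w1min[of w0] w0 1 w0a by (auto simp: U_def p1_def)
    have p1b: "pi/3 < p1" using bad[of w1] w1 by (auto simp: U_def p1_def)
    define L where "L = {x \<in> B ` N. x < p1 - \<alpha>}"
    have Lf: "finite L" using hfin by (simp add: L_def)
    define M where "M = Max (insert (p1 - \<alpha> - 1/10) L)"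
    have M1: "M < p1 - \<alpha>"
      using Max_in[of "insert (p1 - \<alpha> - 1/10) L"] Lf unfolding M_def L_def by auto
    have M2: "p1 - \<alpha> - 1/10 \<le> M" using Lf by (simp add: M_def)
    have M3: "\<And>x. x \<in> L \<Longrightarrow> x \<le> M" using Lf by (simp add: M_def)
    define e where "e = (p1 - \<alpha> - M)/2"
    have e1: "0 < e" "e \<le> 1/20" using M1 M2 by (auto simp: e_def)
    define th where "th = p1 - \<alpha>/2 - e"
    have "\<bar>th\<bar> \<le> \<alpha>/2" using p1a p1b e1 pi3 by (auto simp: th_def)
    then obtain x m where x: "x \<in> N" and hx: "\<bar>th - B x - 2*pi*of_int m\<bar> \<le> \<alpha>/2"
      using cov by blast
    have "m = 0" using rng[OF x] hx[unfolded abs_le_iff] al pi3 p1a p1b e1 by (intro m_zero[of "B x"]) (auto simp: th_def)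
    have bx: "p1 - \<alpha> - e \<le> B x" "B x \<le> p1 - e" using hx[unfolded abs_le_iff] \<open>m = 0\<close> by (auto simp: th_def)
    have "x \<notin> U" using w1min[of x] bx e1 by (auto simp: p1_def)
    then have bxn: "B x < 0" using x bad[OF x] pi3 by (auto simp: U_def)
    have "p1 - \<alpha> \<le> B x"
    proof (rule ccontr)
      assume "\<not> p1 - \<alpha> \<le> B x"
      then have "B x \<in> L" using x by (auto simp: L_def)
      then have "B x \<le> M" by (rule M3)
      then show False using bx M1 e_def by (simp add: field_simps)
    qed
    moreover have "w1 \<in> N" "B w1 > 0" using w1 by (auto simp: U_def)
    ultimately show ?thesis using x bxn unfolding p1_def by (intro bexI[of _ w1] bexI[of _ x]) auto
  next
    case 2
    define U where "U = {w \<in> N. B w < 0}"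
    have Uf: "finite (B ` U)" using hfin by (simp add: U_def)
    have Une: "B ` U \<noteq> {}" using w0 2 by (auto simp: U_def)
    obtain w1 where w1: "w1 \<in> U" "B w1 = Max (B ` U)" using Max_in[OF Uf Une] by auto
    have w1max: "\<And>w. w \<in> U \<Longrightarrow> B w \<le> B w1" using w1(2) Max_ge[OF Uf] by auto
    define p1 where "p1 = B w1"
    have p1a: "-\<alpha>/2 \<le> p1" using w1max[of w0] w0 2 w0a by (auto simp: U_def p1_def)
    have p1b: "p1 < -pi/3" using bad[of w1] w1 by (auto simp: U_def p1_def)
    define L where "L = {x \<in> B ` N. x > p1 + \<alpha>}"
    have Lf: "finite L" using hfin by (simp add: L_def)
    define M where "M = Min (insert (p1 + \<alpha> + 1/10) L)"
    have M1: "M > p1 + \<alpha>"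
      using Min_in[of "insert (p1 + \<alpha> + 1/10) L"] Lf unfolding M_def L_def by auto
    have M2: "M \<le> p1 + \<alpha> + 1/10" using Lf by (simp add: M_def)
    have M3: "\<And>x. x \<in> L \<Longrightarrow> M \<le> x" using Lf by (simp add: M_def)
    define e where "e = (M - p1 - \<alpha>)/2"
    have e1: "0 < e" "e \<le> 1/20" using M1 M2 by (auto simp: e_def)
    define th where "th = p1 + \<alpha>/2 + e"
    have "\<bar>th\<bar> \<le> \<alpha>/2" using p1a p1b e1 pi3 by (auto simp: th_def)
    then obtain x m where x: "x \<in> N" and hx: "\<bar>th - B x - 2*pi*of_int m\<bar> \<le> \<alpha>/2"
      using cov by blast
    have "m = 0" using rng[OF x] hx[unfolded abs_le_iff] al pi3 p1a p1b e1 by (intro m_zero[of "B x"]) (auto simp: th_def)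
    have bx: "p1 + e \<le> B x" "B x \<le> p1 + \<alpha> + e" using hx[unfolded abs_le_iff] \<open>m = 0\<close> by (auto simp: th_def)
    have "x \<notin> U" using w1max[of x] bx e1 by (auto simp: p1_def)
    then have bxn: "B x > 0" using x bad[OF x] pi3 by (auto simp: U_def)
    have "B x \<le> p1 + \<alpha>"
    proof (rule ccontr)
      assume "\<not> B x \<le> p1 + \<alpha>"
      then have "B x \<in> L" using x by (auto simp: L_def)
      then have "M \<le> B x" by (rule M3)
      then show False using bx M1 e_def by (simp add: field_simps)
    qed
    moreover have "w1 \<in> N" "B w1 < 0" using w1 by (auto simp: U_def)
    ultimately show ?thesis using x bxn unfolding p1_def by (intro bexI[of _ x] bexI[of _ w1]) auto
  qed
qed


lemma idx_u_range: "1 \<le> k \<Longrightarrow> idx_u V r k \<alpha> u \<in> {1..k}"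
proof -
  assume k: "1 \<le> k"
  show ?thesis
  proof (cases "\<exists>i\<in>{1..k}. \<not> has_gap \<alpha> u (S_i V r i u)")
    case True
    then have "\<exists>i. i \<in> {1..k} \<and> \<not> has_gap \<alpha> u (S_i V r i u)" by blast
    from LeastI_ex[OF this] True show ?thesis by (simp add: idx_u_def)
  next
    case False
    then show ?thesis using k by (simp add: idx_u_def)
  qed
qed

lemma idx_star_prop:
  assumes "1 \<le> k"
  shows "idx_star V r k \<alpha> u \<in> {1..k} \<and>
    cover \<alpha> (dirs u (S_i V r (idx_star V r k \<alpha> u) u)) = cover \<alpha> (dirs u (S_i V r k u))"
  unfolding idx_star_def
  by (rule LeastI[of _ k]) (use assms in auto)

lemma shrink_ex: "1 \<le> k \<Longrightarrow> \<exists>j\<in>{1..k}. N_shrink V r k \<alpha> u = S_i V r j u"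
  using idx_star_prop[of k V r \<alpha> u] idx_u_range[of k V r \<alpha> u]
  by (auto simp: N_shrink_def N_cbtc_def)

lemma r_le:
  fixes r :: "nat \<Rightarrow> real" and j k :: nat
  assumes "\<And>i j. 1 \<le> i \<Longrightarrow> i < j \<Longrightarrow> j \<le> k \<Longrightarrow> r i < r j" "j \<in> {1..k}"
  shows "r j \<le> r k"
proof (cases "j = k")
  case False
  then have "j < k" using assms(2) by auto
  then have "r j < r k" using assms(1)[of j k] assms(2) by auto
  then show ?thesis by simp
qed simp

lemma nogap_cover:
  assumes "\<not> has_gap \<alpha> u S" "u \<notin> S"
  shows "cover \<alpha> (dirs u S) = UNIV"
proof (intro set_eqI iffI)
  fix \<theta> :: real
  from assms(1) obtain v where v: "v \<in> S" "v \<in> cone u \<alpha> \<theta>" unfolding has_gap_def by blast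
  then obtain t \<phi> where tp: "v = u + complex_of_real t * cis \<phi>" "t \<ge> 0"
      "\<theta> - \<alpha>/2 \<le> \<phi>" "\<phi> \<le> \<theta> + \<alpha>/2"
    unfolding cone_def by blast
  have "t \<noteq> 0" using tp(1) v(1) assms(2) by auto
  with tp have "\<phi> \<in> dirs u S" using v(1) unfolding dirs_def by (intro CollectI bexI[of _ v]) auto
  moreover have "\<bar>\<theta> - \<phi> - 2 * pi * of_int (0::int)\<bar> \<le> \<alpha>/2" 
  proof -
    have "\<bar>\<theta> - \<phi>\<bar> \<le> \<alpha>/2" by (rule abs_leI) (use tp(3,4) in linarith)+
    then show ?thesis by simp
  qed
  ultimately show "\<theta> \<in> cover \<alpha> (dirs u S)" unfolding cover_def by blast
qed auto

lemma dirs_mono: "A \<subseteq> B \<Longrightarrow> dirs u A \<subseteq> dirs u B"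
  unfolding dirs_def by blast

lemma cover_mono: "A \<subseteq> B \<Longrightarrow> cover \<alpha> A \<subseteq> cover \<alpha> B"
  unfolding cover_def by blast

lemma cover_shrink:
  assumes k: "1 \<le> k" and v: "v \<in> S_i V r k u"
  shows "cover \<alpha> (dirs u {v}) \<subseteq> cover \<alpha> (dirs u (N_shrink V r k \<alpha> u))"
proof (cases "boundary V r k \<alpha> u")
  case True
  have "cover \<alpha> (dirs u {v}) \<subseteq> cover \<alpha> (dirs u (S_i V r k u))"
    using v by (intro cover_mono dirs_mono) auto
  also have "\<dots> = cover \<alpha> (dirs u (N_shrink V r k \<alpha> u))"
    using idx_star_prop[OF k, of V r \<alpha> u] True by (simp add: N_shrink_def)
  finally show ?thesis .
next
  case False
  then have ng: "\<not> has_gap \<alpha> u (S_i V r k u)" by (simp add: boundary_def)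
  then have ex: "\<exists>i. i \<in> {1..k} \<and> \<not> has_gap \<alpha> u (S_i V r i u)" using k by auto
  then have "\<not> has_gap \<alpha> u (S_i V r (idx_u V r k \<alpha> u) u)"
    using LeastI_ex[OF ex] by (auto simp: idx_u_def)
  then have "cover \<alpha> (dirs u (N_cbtc V r k \<alpha> u)) = UNIV"
    unfolding N_cbtc_def by (rule nogap_cover) (simp add: S_i_def)
  then show ?thesis using False by (simp add: N_shrink_def)
qed


lemma arg_rep:
  assumes "r > 0"
  shows "\<exists>j::int. x = Arg (complex_of_real r * cis x) + 2*pi*of_int j"
proof -
  define z where "z = complex_of_real r * cis x"
  have z0: "z \<noteq> 0" using assms by (simp add: z_def)
  have "sgn z = cis x" using assms by (simp add: z_def sgn_mult sgn_of_real)
  then have "cis (Arg z) = cis x" using cis_Arg[OF z0] by simp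
  then have "sin x = sin (Arg z) \<and> cos x = cos (Arg z)" by (simp add: complex_eq_iff)
  then obtain n :: int where "x = Arg z + 2*pi*of_int n" using sin_cos_eq_iff by blast
  then show ?thesis unfolding z_def by blast
qed

lemma arg_bad:
  fixes z :: complex
  assumes "z \<noteq> 0" "cmod z < 1" "1 \<le> cmod (z - 1)"
  shows "pi/3 < \<bar>Arg z\<bar>"
proof (rule ccontr)
  assume H: "\<not> pi/3 < \<bar>Arg z\<bar>"
  define a where "a = cmod z"
  have ap: "0 < a" "a < 1" using assms by (auto simp: a_def)
  have Rz: "Re z = a * cos (Arg z)" "Im z = a * sin (Arg z)"
    using assms by (simp_all add: a_def cos_Arg sin_Arg)
  have "1 \<le> (cmod (z - 1))^2" using assms by simp
  also have "(cmod (z - 1))^2 = (a * cos (Arg z) - 1)^2 + (a * sin (Arg z))^2"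
    by (simp add: cmod_power2 Rz)
  also have "\<dots> = a*a*((sin (Arg z))^2 + (cos (Arg z))^2) - 2*a*cos (Arg z) + 1" by algebra
  finally have "0 \<le> a * (a - 2 * cos (Arg z))" by (simp add: algebra_simps)
  then have ha: "2 * cos (Arg z) \<le> a" using ap by (simp add: zero_le_mult_iff)
  have "cos (pi/3) \<le> cos \<bar>Arg z\<bar>" using H by (intro cos_monotone_0_pi_le) auto
  also have "cos \<bar>Arg z\<bar> = cos (Arg z)" by (simp add: abs_real_def)
  finally show False using ha ap by (simp add: cos_60)
qed

lemma norm_rel:
  fixes a b w :: complex
  assumes "a \<noteq> b"
  shows "cmod ((w - a)/(b - a)) = dist w a / dist a b"
    and "cmod ((w - a)/(b - a) - 1) = dist w b / dist a b"
proof -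
  have ba: "b - a \<noteq> 0" using assms by simp
  show "cmod ((w - a)/(b - a)) = dist w a / dist a b"
    by (simp add: norm_divide dist_norm norm_minus_commute)
  have "(w - a)/(b - a) - 1 = (w - b)/(b - a)" using ba by (simp add: field_simps)
  then show "cmod ((w - a)/(b - a) - 1) = dist w b / dist a b"
    by (simp add: norm_divide dist_norm norm_minus_commute)
qed

lemma dist_combine:
  fixes a b w x :: complex
  assumes "a \<noteq> b"
  shows "dist w x = cmod ((w - a)/(b - a) + (x - b)/(a - b) - 1) * dist a b"
proof -
  have ba: "b - a \<noteq> 0" "a - b \<noteq> 0" using assms by auto
  have e1: "(w - a)/(b - a) * (b - a) = w - a" using ba by simp
  have e2: "(x - b)/(a - b) * (b - a) = -(x - b)"
  proof -
    have "(x - b)/(a - b) * (b - a) = (x - b)/(a - b) * (-(a - b))" by simp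
    also have "\<dots> = -(x - b)" using ba by (simp del: minus_diff_eq)
    finally show ?thesis .
  qed
  have "((w - a)/(b - a) + (x - b)/(a - b) - 1) * (b - a)
      = (w - a)/(b - a) * (b - a) + (x - b)/(a - b) * (b - a) - (b - a)" by (simp add: algebra_simps)
  also have "\<dots> = w - x" unfolding e1 e2 by (simp add: algebra_simps)
  finally have "w - x = ((w - a)/(b - a) + (x - b)/(a - b) - 1) * (b - a)" by simp
  then show ?thesis by (simp add: dist_norm norm_mult norm_minus_commute)
qed

lemma cov_arg:
  fixes a b :: complex
  assumes ab: "a \<noteq> b" and cv: "cover \<alpha> (dirs a {b}) \<subseteq> cover \<alpha> (dirs a N)"
    and th: "\<bar>\<theta>\<bar> \<le> \<alpha>/2"
  shows "\<exists>w\<in>N. \<exists>m::int. \<bar>\<theta> - Arg ((w - a)/(b - a)) - 2*pi*of_int m\<bar> \<le> \<alpha>/2"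
proof -
  define A where "A = Arg (b - a)"
  define d where "d = cmod (b - a)"
  have d0: "d > 0" using ab by (simp add: d_def)
  have bA: "b - a = complex_of_real d * cis A"
    using rcis_cmod_Arg[of "b - a"] by (simp add: rcis_def d_def A_def)
  have "A \<in> dirs a {b}" unfolding dirs_def using d0 bA by blast
  moreover have "\<bar>(\<theta> + A) - A - 2*pi*of_int (0::int)\<bar> \<le> \<alpha>/2" using th by simp
  ultimately have "\<theta> + A \<in> cover \<alpha> (dirs a {b})" unfolding cover_def by blast
  with cv have "\<theta> + A \<in> cover \<alpha> (dirs a N)" by blast
  then obtain \<phi> m where ph: "\<phi> \<in> dirs a N" and hm: "\<bar>\<theta> + A - \<phi> - 2*pi*of_int (m::int)\<bar> \<le> \<alpha>/2"
    unfolding cover_def by blast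
  then obtain w t where w: "w \<in> N" "t > 0" "w - a = complex_of_real t * cis \<phi>"
    unfolding dirs_def by blast
  have "(w - a)/(b - a) = complex_of_real (t/d) * cis (\<phi> - A)"
    using w(3) bA d0 by (simp add: cis_divide[symmetric] field_simps)
  moreover obtain j :: int where "\<phi> - A = Arg (complex_of_real (t/d) * cis (\<phi> - A)) + 2*pi*of_int j"
    using arg_rep[of "t/d" "\<phi> - A"] w(2) d0 by auto
  ultimately have eq: "\<phi> - A = Arg ((w - a)/(b - a)) + 2*pi*of_int j" by simp
  have "\<theta> - Arg ((w - a)/(b - a)) - 2*pi*of_int (m + j) = \<theta> + A - \<phi> - 2*pi*of_int m"
    using eq by (simp add: algebra_simps)
  with hm w(1) show ?thesis by metis
qed

theorem theorem3:
  fixes V :: "complex set" and r :: "nat \<Rightarrow> real" and k :: nat and R \<alpha> :: real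
  assumes "finite V"
    and "R > 0"
    and "k \<ge> 1"
    and "r 1 > 0"
    and "\<And>i j. 1 \<le> i \<Longrightarrow> i < j \<Longrightarrow> j \<le> k \<Longrightarrow> r i < r j"
    and "r k = R"
    and "0 < \<alpha>" and "\<alpha> \<le> 5 * pi / 6"
    and "u \<in> V" and "v \<in> V"
  shows "(edge_s V r k \<alpha>)\<^sup>*\<^sup>* u v \<longleftrightarrow> (edge_R V R)\<^sup>*\<^sup>* u v"
proof -
  note finV = assms(1) and k = assms(3) and rmono = assms(5) and rk = assms(6)
    and al = assms(7,8)
  let ?E = "edge_s V r k \<alpha>"
  let ?N = "N_shrink V r k \<alpha>"
  have Nsub: "w \<in> V \<and> w \<noteq> p \<and> dist p w \<le> R" if "w \<in> ?N p" for p w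
  proof -
    obtain j where j: "j \<in> {1..k}" "?N p = S_i V r j p" using shrink_ex[OF k] by blast
    have "r j \<le> r k" by (rule r_le[OF rmono j(1)])
    then show ?thesis using that j rk by (auto simp: S_i_def)
  qed
  have fwd: "edge_R V R p q" if "?E p q" for p q
    using that Nsub[of q p] Nsub[of p q] by (auto simp: edge_s_def edge_R_def dist_commute)
  have sym: "?E q p" if "?E p q" for p q using that by (auto simp: edge_s_def)
  have chain: "?E\<^sup>*\<^sup>* p q" if "?E p w" "?E\<^sup>*\<^sup>* w x" "?E x q" for p q w x
    using that by (meson converse_rtranclp_into_rtranclp rtranclp.rtrancl_into_rtrancl)
  have side: "(\<forall>w\<in>?N p. w \<in> V \<and> w \<noteq> p \<and> dist p w < dist p q \<and> ?E p w) \<and>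
      cover \<alpha> (dirs p {q}) \<subseteq> cover \<alpha> (dirs p (?N p))"
    if "p \<in> V" "q \<in> V" "p \<noteq> q" "dist p q \<le> R" "q \<notin> ?N p" for p q
  proof
    obtain j where j: "j \<in> {1..k}" "?N p = S_i V r j p" using shrink_ex[OF k] by blast
    have "r j < dist p q" using that j by (auto simp: S_i_def)
    then show "\<forall>w\<in>?N p. w \<in> V \<and> w \<noteq> p \<and> dist p w < dist p q \<and> ?E p w"
      using j that by (auto simp: S_i_def edge_s_def)
    have "q \<in> S_i V r k p" using that rk by (auto simp: S_i_def)
    then show "cover \<alpha> (dirs p {q}) \<subseteq> cover \<alpha> (dirs p (?N p))" by (rule cover_shrink[OF k])
  qed
  define \<mu> :: "complex \<Rightarrow> complex \<Rightarrow> nat" where "\<mu> a b = card {p \<in> V \<times> V. dist (fst p) (snd p) < dist a b}" for a b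
  have \<mu>lt: "\<mu> x y < \<mu> a b" if "x \<in> V" "y \<in> V" "dist x y < dist a b" for a b x y
  proof -
    have "{p \<in> V \<times> V. dist (fst p) (snd p) < dist x y} \<subset> {p \<in> V \<times> V. dist (fst p) (snd p) < dist a b}"
    proof (rule psubsetI)
      show "{p \<in> V \<times> V. dist (fst p) (snd p) < dist x y} \<subseteq> {p \<in> V \<times> V. dist (fst p) (snd p) < dist a b}"
        using that by auto
      have "(x, y) \<in> {p \<in> V \<times> V. dist (fst p) (snd p) < dist a b}" using that by auto
      moreover have "(x, y) \<notin> {p \<in> V \<times> V. dist (fst p) (snd p) < dist x y}" by auto
      ultimately show "{p \<in> V \<times> V. dist (fst p) (snd p) < dist x y} \<noteq> {p \<in> V \<times> V. dist (fst p) (snd p) < dist a b}"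
        by blast
    qed
    moreover have "finite {p \<in> V \<times> V. dist (fst p) (snd p) < dist a b}" using finV by simp
    ultimately show ?thesis unfolding \<mu>_def by (rule psubset_card_mono[rotated])
  qed
  have key0: "\<forall>a b. \<mu> a b = n \<longrightarrow> a \<in> V \<longrightarrow> b \<in> V \<longrightarrow> dist a b \<le> R \<longrightarrow> ?E\<^sup>*\<^sup>* a b" for n
  proof (induction n rule: less_induct)
    case (less n)
    show ?case
    proof (intro allI impI)
      fix a b assume \<mu>n: "\<mu> a b = n" and a: "a \<in> V" and b: "b \<in> V" and dR: "dist a b \<le> R"
      have IH: "?E\<^sup>*\<^sup>* x y" if "x \<in> V" "y \<in> V" "dist x y < dist a b" for x y
        using less.IH[of "\<mu> x y"] \<mu>lt[OF that] \<mu>n that dR by auto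
      show "?E\<^sup>*\<^sup>* a b"
      proof (cases "?E a b \<or> a = b")
        case True then show ?thesis by auto
      next
        case False
        then have ab: "a \<noteq> b" and nE: "\<not> ?E a b" by auto
        have nb: "b \<notin> ?N a" and na: "a \<notin> ?N b" using nE a b by (auto simp: edge_s_def)
        have dR': "dist b a \<le> R" using dR by (simp add: dist_commute)
        note sa = side[OF a b ab dR nb] and sb = side[OF b a ab[symmetric] dR' na]
        have dpos: "dist a b > 0" using ab by simp
        show ?thesis
        proof (cases "\<exists>w\<in>?N a. dist w b < dist a b")
          case True
          then obtain w where w: "w \<in> ?N a" "dist w b < dist a b" by blast
          have "?E a w" "w \<in> V" using sa w by auto
          moreover have "?E\<^sup>*\<^sup>* w b" using IH[OF _ b w(2)] \<open>w \<in> V\<close> by simp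
          ultimately show ?thesis by (meson converse_rtranclp_into_rtranclp)
        next
          case nA: False
          show ?thesis
          proof (cases "\<exists>x\<in>?N b. dist x a < dist a b")
            case True
            then obtain x where x: "x \<in> ?N b" "dist x a < dist a b" by blast
            have "?E b x" "x \<in> V" using sb x by auto
            then have "?E x b" by (simp add: sym)
            moreover have "?E\<^sup>*\<^sup>* a x" using IH[OF a \<open>x \<in> V\<close>] x(2) by (simp add: dist_commute)
            ultimately show ?thesis by (meson rtranclp.rtrancl_into_rtrancl)
          next
            case nB: False
            define Ba where "Ba w = Arg ((w - a)/(b - a))" for w
            define Bb where "Bb x = Arg ((x - b)/(a - b))" for x
            have fa: "(w - a)/(b - a) \<noteq> 0 \<and> cmod ((w - a)/(b - a)) < 1 \<and> 1 \<le> cmod ((w - a)/(b - a) - 1)"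
              if "w \<in> ?N a" for w
            proof -
              have "w \<noteq> a" "dist a w < dist a b" "dist a b \<le> dist w b" using sa that nA by auto
              then show ?thesis using ab dpos
                by (auto simp: norm_rel[OF ab] dist_commute divide_less_eq_1 le_divide_eq_1)
            qed
            have fb: "(x - b)/(a - b) \<noteq> 0 \<and> cmod ((x - b)/(a - b)) < 1 \<and> 1 \<le> cmod ((x - b)/(a - b) - 1)"
              if "x \<in> ?N b" for x
            proof -
              have "x \<noteq> b" "dist b x < dist b a" "dist b a \<le> dist x a" using sb that nB
                by (auto simp: dist_commute)
              then show ?thesis using ab dpos
                by (auto simp: norm_rel[OF ab[symmetric]] dist_commute divide_less_eq_1 le_divide_eq_1)
            qed
            have finNa: "finite (?N a)" using finV Nsub by (meson rev_finite_subset subsetI)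
            have finNb: "finite (?N b)" using finV Nsub by (meson rev_finite_subset subsetI)
            obtain w1 w2 where w12: "w1 \<in> ?N a" "w2 \<in> ?N a" "Ba w1 > 0" "Ba w2 < 0" "Ba w1 - Ba w2 \<le> \<alpha>"
            proof -
              have "\<exists>w1\<in>?N a. \<exists>w2\<in>?N a. Ba w1 > 0 \<and> Ba w2 < 0 \<and> Ba w1 - Ba w2 \<le> \<alpha>"
              proof (rule extract_nodes[OF finNa al])
                show "-pi < Ba w \<and> Ba w \<le> pi" for w unfolding Ba_def by (rule Arg_bounded)
                show "\<exists>w\<in>?N a. \<exists>m::int. \<bar>\<theta> - Ba w - 2*pi*of_int m\<bar> \<le> \<alpha>/2" if "\<bar>\<theta>\<bar> \<le> \<alpha>/2" for \<theta>
                  unfolding Ba_def using cov_arg[OF ab conjunct2[OF sa] that] .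
                show "pi/3 < \<bar>Ba w\<bar>" if "w \<in> ?N a" for w
                  unfolding Ba_def using fa[OF that] by (intro arg_bad) auto
              qed
              then show ?thesis using that by blast
            qed
            obtain x1 x2 where x12: "x1 \<in> ?N b" "x2 \<in> ?N b" "Bb x1 > 0" "Bb x2 < 0" "Bb x1 - Bb x2 \<le> \<alpha>"
            proof -
              have "\<exists>x1\<in>?N b. \<exists>x2\<in>?N b. Bb x1 > 0 \<and> Bb x2 < 0 \<and> Bb x1 - Bb x2 \<le> \<alpha>"
              proof (rule extract_nodes[OF finNb al])
                show "-pi < Bb w \<and> Bb w \<le> pi" for w unfolding Bb_def by (rule Arg_bounded)
                show "\<exists>w\<in>?N b. \<exists>m::int. \<bar>\<theta> - Bb w - 2*pi*of_int m\<bar> \<le> \<alpha>/2" if "\<bar>\<theta>\<bar> \<le> \<alpha>/2" for \<theta>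
                  unfolding Bb_def using cov_arg[OF ab[symmetric] conjunct2[OF sb] that] .
                show "pi/3 < \<bar>Bb w\<bar>" if "w \<in> ?N b" for w
                  unfolding Bb_def using fb[OF that] by (intro arg_bad) auto
              qed
              then show ?thesis using that by blast
            qed
            have Va: "w1 \<in> V" "w2 \<in> V" "?E a w1" "?E a w2" using sa w12 by auto
            have Vb: "x1 \<in> V" "x2 \<in> V" "?E x1 b" "?E x2 b" using sb x12 sym by auto
            show ?thesis
            proof (cases "Ba w1 - Bb x2 \<le> 5*pi/6")
              case True
              have "cmod ((w1 - a)/(b - a) + (x2 - b)/(a - b) - 1) < 1"
                using fa[OF w12(1)] fb[OF x12(2)] w12(3) x12(4) True
                by (intro geomC) (auto simp: Ba_def Bb_def)
              then have "dist w1 x2 < dist a b"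
                using dist_combine[OF ab, of w1 x2] dpos by simp
              then have "?E\<^sup>*\<^sup>* w1 x2" using IH Va Vb by auto
              then show ?thesis using chain Va Vb by blast
            next
              case False
              then have F: "Bb x1 - Ba w2 \<le> 5*pi/6" using w12(5) x12(5) al by linarith
              have "cmod ((x1 - b)/(a - b) + (w2 - a)/(b - a) - 1) < 1"
                using fa[OF w12(2)] fb[OF x12(1)] w12(4) x12(3) F
                by (intro geomC) (auto simp: Ba_def Bb_def)
              then have "dist x1 w2 < dist a b"
                using dist_combine[OF ab[symmetric], of x1 w2] dpos by (simp add: dist_commute)
              then have "?E\<^sup>*\<^sup>* w2 x1" using IH Va Vb by (auto simp: dist_commute)
              then show ?thesis using chain Va Vb by blast
            qed
          qed
        qed
      qed
    qed
  qed
  have key: "?E\<^sup>*\<^sup>* a b" if "a \<in> V" "b \<in> V" "dist a b \<le> R" for a b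
    using key0[of "\<mu> a b"] that by blast
  show ?thesis
  proof
    assume "?E\<^sup>*\<^sup>* u v"
    then show "(edge_R V R)\<^sup>*\<^sup>* u v"
      by (induction rule: rtranclp_induct) (auto intro: rtranclp.rtrancl_into_rtrancl fwd)
  next
    assume "(edge_R V R)\<^sup>*\<^sup>* u v"
    then show "?E\<^sup>*\<^sup>* u v"
    proof (induction rule: rtranclp_induct)
      case (step y z)
      then have "?E\<^sup>*\<^sup>* y z" using key by (auto simp: edge_R_def)
      then show ?case using step.IH by (rule rtranclp_trans[rotated])
    qed simp
  qed
qed

end
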